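(* Let $\mathcal{E}$ be an even Dirichlet form on $L^2(X,m)$ with growth type at most $r\ge 2$, let $\mathfrak{D}$ be its Dirichlet space and $\partial\mathcal{E}$ its subgradient. Let $q\ge 2$, $\lambda>0$, $f\in L^2(X,m)\cap L^q(X,m)$, and let $u\in L^2(X,m)$ be the solution of $\partial\mathcal{E}(u)+\lambda u\ni f$, i.e. $(u,f-\lambda u)\in\partial\mathcal{E}$. Let $p\ge 2$ be such that $\left(1-\frac2q\right)\frac pr>1$, and assume that $\mathfrak{D}$ embeds continuously into $L^p(X,m)$. Then $u\in L^\infty(X,m)$.
   Context: Standing setting: $X$ is a Hausdorff topological space and $m$ is a Borel measure on $X$ with full support, i.e. no nonempty open subset of $X$ has $m$-measure zero. $L^2(X,m)$ is the real $L^2$ space with inner product $\langle\cdot,\cdot\rangle_{L^2}$. A Dirichlet form is a functional $\mathcal{E}:L^2(X,m)\to[0,\infty]$ that is convex, lower semicontinuous and densely defined (its effective domain $\mathrm{dom}(\mathcal{E})=\{u:\mathcal{E}(u)<\infty\}$ is dense in $L^2(X,m)$), and such that for all $u,v\in L^2(X,m)$ and $\alpha>0$: (1) $\mathcal{E}(u\wedge v)+\mathcal{E}(u\vee v)\le \mathcal{E}(u)+\mathcal{E}(v)$; (2) $\mathcal{E}\big(v+\tfrac12((u-v+\alpha)_+-(u-v-\alpha)_-)\big)+\mathcal{E}\big(u-\tfrac12((u-v+\alpha)_+-(u-v-\alpha)_-)\big)\le \mathcal{E}(u)+\mathcal{E}(v)$, where $(\cdot)_+$, $(\cdot)_-$ denote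 positive and negative parts. $\mathcal{E}$ is called even if $\mathcal{E}(0)=0$ and $\mathcal{E}(-u)=\mathcal{E}(u)$ for all $u$. A Dirichlet form $\mathcal{E}$ has growth type at most $r$ ($r\ge 2$) if $\mathcal{E}(\lambda u)\le\lambda^r\mathcal{E}(u)$ for every $u\in L^2(X,m)$ and every $\lambda\ge 1$. The subgradient is $\partial\mathcal{E}=\{(u,f)\in L^2\times L^2: u\in\mathrm{dom}(\mathcal{E}),\ \langle f,v-u\rangle_{L^2}\le\mathcal{E}(v)-\mathcal{E}(u)\text{ for all }v\in L^2(X,m)\}$; it is a maximal monotone operator, so for every $\lambda>0$ and $f\in L^2(X,m)$ there is a unique $u$ with $(u,f-\lambda u)\in\partial\mathcal{E}$. Set $\mathcal{E}_1(u)=\|u\|_{L^2(X,m)}^2+\mathcal{E}(u)$. The Dirichlet space is $\mathfrak{D}=\{u\in L^2(X,m):\exists\lambda>0,\ \mathcal{E}_1(\lambda u)<\infty\}$ with the Minkowski norm $\|u\|_{\mathfrak{D}}=\inf\{\lambda>0:\mathcal{E}_1(u/\lambda)\le 1\}$. "$\mathfrak{D}$ embeds continuously into $L^p$" means $\mathfrak{D}\subseteq L^p(X,m)$ and $\|u\|_{L^p}\le c\|u\|_{\mathfrak{D}}$ for some $c$ and all $u\in\mathfrak{D}$. *)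

theory Defs
  imports "HOL-Analysis.Analysis"
begin

text \<open>Functions on X; elements of L^2(X,m) are represented by measurable
  square-integrable functions, and all notions below respect a.e. equality.\<close>

definition memLp :: "real \<Rightarrow> 'a measure \<Rightarrow> ('a \<Rightarrow> real) \<Rightarrow> bool" where
  "memLp p M u \<longleftrightarrow> u \<in> borel_measurable M \<and> integrable M (\<lambda>x. \<bar>u x\<bar> powr p)"

definition memL2 :: "'a measure \<Rightarrow> ('a \<Rightarrow> real) \<Rightarrow> bool" where
  "memL2 M u \<longleftrightarrow> u \<in> borel_measurable M \<and> integrable M (\<lambda>x. (u x)^2)"

definition memLinf :: "'a measure \<Rightarrow> ('a \<Rightarrow> real) \<Rightarrow> bool" where
  "memLinf M u \<longleftrightarrow> u \<in> borel_measurable M \<and> (\<exists>C. AE x in M. \<bar>u x\<bar> \<le> C)"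

definition Lp_norm :: "real \<Rightarrow> 'a measure \<Rightarrow> ('a \<Rightarrow> real) \<Rightarrow> real" where
  "Lp_norm p M u = (\<integral>x. \<bar>u x\<bar> powr p \<partial>M) powr (1 / p)"

definition L2_inner :: "'a measure \<Rightarrow> ('a \<Rightarrow> real) \<Rightarrow> ('a \<Rightarrow> real) \<Rightarrow> real" where
  "L2_inner M f g = (\<integral>x. f x * g x \<partial>M)"

definition L2_norm :: "'a measure \<Rightarrow> ('a \<Rightarrow> real) \<Rightarrow> real" where
  "L2_norm M u = sqrt (\<integral>x. (u x)^2 \<partial>M)"

definition posp :: "real \<Rightarrow> real" where "posp x = max x 0"
definition negp :: "real \<Rightarrow> real" where "negp x = max (- x) 0"

definition dirichlet_form :: "'a measure \<Rightarrow> (('a \<Rightarrow> real) \<Rightarrow> ennreal) \<Rightarrow> bool" where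
  "dirichlet_form M E \<longleftrightarrow>
     \<comment> \<open>well defined on L^2 classes\<close>
     (\<forall>u v. memL2 M u \<longrightarrow> memL2 M v \<longrightarrow> (AE x in M. u x = v x) \<longrightarrow> E u = E v)
     \<comment> \<open>convex\<close>
   \<and> (\<forall>u v t. memL2 M u \<longrightarrow> memL2 M v \<longrightarrow> 0 \<le> t \<longrightarrow> t \<le> 1 \<longrightarrow>
        E (\<lambda>x. t * u x + (1 - t) * v x) \<le> ennreal t * E u + ennreal (1 - t) * E v)
     \<comment> \<open>lower semicontinuous w.r.t. the L^2 norm\<close>
   \<and> (\<forall>u us. memL2 M u \<longrightarrow> (\<forall>n. memL2 M (us n)) \<longrightarrow>
        (\<lambda>n. L2_norm M (\<lambda>x. us n x - u x)) \<longlonglongrightarrow> 0 \<longrightarrow>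
        E u \<le> liminf (\<lambda>n. E (us n)))
     \<comment> \<open>densely defined\<close>
   \<and> (\<forall>u e. memL2 M u \<longrightarrow> e > 0 \<longrightarrow>
        (\<exists>v. memL2 M v \<and> E v < \<infinity> \<and> L2_norm M (\<lambda>x. u x - v x) < e))
     \<comment> \<open>(1)\<close>
   \<and> (\<forall>u v. memL2 M u \<longrightarrow> memL2 M v \<longrightarrow>
        E (\<lambda>x. min (u x) (v x)) + E (\<lambda>x. max (u x) (v x)) \<le> E u + E v)
     \<comment> \<open>(2)\<close>
   \<and> (\<forall>u v (\<alpha>::real). memL2 M u \<longrightarrow> memL2 M v \<longrightarrow> \<alpha> > 0 \<longrightarrow>
        (let H = (\<lambda>x. (1/2) * (posp (u x - v x + \<alpha>) - negp (u x - v x - \<alpha>)))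
         in E (\<lambda>x. v x + H x) + E (\<lambda>x. u x - H x) \<le> E u + E v))"

definition even_form :: "(('a \<Rightarrow> real) \<Rightarrow> ennreal) \<Rightarrow> 'a measure \<Rightarrow> bool" where
  "even_form E M \<longleftrightarrow> E (\<lambda>x. 0) = 0 \<and> (\<forall>u. memL2 M u \<longrightarrow> E (\<lambda>x. - u x) = E u)"

definition growth_type_at_most :: "'a measure \<Rightarrow> (('a \<Rightarrow> real) \<Rightarrow> ennreal) \<Rightarrow> real \<Rightarrow> bool" where
  "growth_type_at_most M E r \<longleftrightarrow>
     (\<forall>u (l::real). memL2 M u \<longrightarrow> l \<ge> 1 \<longrightarrow> E (\<lambda>x. l * u x) \<le> ennreal (l powr r) * E u)"

definition subgradient :: "'a measure \<Rightarrow> (('a \<Rightarrow> real) \<Rightarrow> ennreal) \<Rightarrow> (('a \<Rightarrow> real) \<times> ('a \<Rightarrow> real)) set" where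
  "subgradient M E = {(u, f). memL2 M u \<and> memL2 M f \<and> E u < \<infinity> \<and>
     (\<forall>v. memL2 M v \<longrightarrow>
        ereal (L2_inner M f (\<lambda>x. v x - u x)) \<le> enn2ereal (E v) - enn2ereal (E u))}"

definition E1 :: "'a measure \<Rightarrow> (('a \<Rightarrow> real) \<Rightarrow> ennreal) \<Rightarrow> ('a \<Rightarrow> real) \<Rightarrow> ennreal" where
  "E1 M E u = ennreal ((L2_norm M u)^2) + E u"

definition dirichlet_space :: "'a measure \<Rightarrow> (('a \<Rightarrow> real) \<Rightarrow> ennreal) \<Rightarrow> ('a \<Rightarrow> real) set" where
  "dirichlet_space M E = {u. memL2 M u \<and> (\<exists>l>0. E1 M E (\<lambda>x. l * u x) < \<infinity>)}"

definition D_norm :: "'a measure \<Rightarrow> (('a \<Rightarrow> real) \<Rightarrow> ennreal) \<Rightarrow> ('a \<Rightarrow> real) \<Rightarrow> real" where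
  "D_norm M E u = Inf {l. l > 0 \<and> E1 M E (\<lambda>x. u x / l) \<le> 1}"

definition embeds_continuously_Lp :: "'a measure \<Rightarrow> (('a \<Rightarrow> real) \<Rightarrow> ennreal) \<Rightarrow> real \<Rightarrow> bool" where
  "embeds_continuously_Lp M E p \<longleftrightarrow>
     (\<forall>u\<in>dirichlet_space M E. memLp p M u) \<and>
     (\<exists>c. \<forall>u\<in>dirichlet_space M E. Lp_norm p M u \<le> c * D_norm M E u)"

end

theory Submission
  imports Defs
begin

lemma stampacchia:
  fixes \<phi> :: "real \<Rightarrow> real" and C \<beta> p k0 :: real
  assumes nonneg: "\<And>k. k \<ge> k0 \<Longrightarrow> \<phi> k \<ge> 0"
    and mono: "\<And>k h. k0 \<le> k \<Longrightarrow> k \<le> h \<Longrightarrow> \<phi> h \<le> \<phi> k"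
    and C: "C > 0" and \<beta>: "\<beta> > 1" and p: "p > 0"
    and rec: "\<And>k h. k0 \<le> k \<Longrightarrow> k < h \<Longrightarrow> \<phi> h \<le> C * \<phi> k powr \<beta> / (h - k) powr p"
  shows "\<exists>K\<ge>k0. \<phi> K = 0"
proof (cases "\<phi> k0 = 0")
  case True then show ?thesis by auto
next
  case False
  define \<phi>0 where "\<phi>0 = \<phi> k0"
  have \<phi>0: "\<phi>0 > 0" using False nonneg[of k0] \<phi>0_def by auto
  define \<mu> where "\<mu> = p / (\<beta> - 1)"
  have \<mu>: "\<mu> > 0" using p \<beta> \<mu>_def by auto
  have \<mu>\<beta>: "\<mu> * \<beta> = \<mu> + p" using \<beta> unfolding \<mu>_def by (simp add: field_simps)
  define D where "D = C * \<phi>0 powr (\<beta> - 1) * 2 powr (\<mu> * \<beta>)"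
  have Dpos: "D > 0" using C \<phi>0 D_def by auto
  define d where "d = D powr (1 / p)"
  have dpos: "d > 0" using Dpos d_def by auto
  have dp: "d powr p = D" using Dpos p d_def by (simp add: powr_powr)
  define k where "k n = k0 + d - d / 2^n" for n :: nat
  have kge: "k n \<ge> k0" for n
  proof -
    have "d / 2^n \<le> d" using dpos by (simp add: divide_le_eq_1 field_simps)
    then show ?thesis unfolding k_def by simp
  qed
  have kle: "k n \<le> k0 + d" for n using dpos unfolding k_def by simp
  have kdiff: "k (Suc n) - k n = d / 2 ^ Suc n" for n
    unfolding k_def by (simp add: field_simps)
  have main: "\<phi> (k n) \<le> \<phi>0 * 2 powr (- (real n * \<mu>))" for n
  proof (induction n)
    case 0 then show ?case by (simp add: k_def \<phi>0_def)
  next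
    case (Suc n)
    have lt: "k n < k (Suc n)" using kdiff[of n] dpos
      by (metis diff_gt_0_iff_gt divide_pos_pos zero_less_numeral zero_less_power)
    have "\<phi> (k (Suc n)) \<le> C * \<phi> (k n) powr \<beta> / (k (Suc n) - k n) powr p"
      using rec[OF kge lt] .
    also have "\<dots> \<le> C * (\<phi>0 * 2 powr (- (real n * \<mu>))) powr \<beta> / (k (Suc n) - k n) powr p"
      apply (intro divide_right_mono mult_left_mono powr_mono2)
      using Suc nonneg[OF kge[of n]] C \<beta> by auto
    also have "\<dots> = \<phi>0 * 2 powr (- (real (Suc n) * \<mu>))"
    proof -
      have e1: "(\<phi>0 * 2 powr (- (real n * \<mu>))) powr \<beta> = \<phi>0 powr \<beta> * 2 powr (- (real n * \<mu>) * \<beta>)"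
        using \<phi>0 by (simp add: powr_mult powr_powr)
      have e2: "(k (Suc n) - k n) powr p = D / 2 powr (real (Suc n) * p)"
      proof -
        have "(2::real) ^ Suc n = 2 powr real (Suc n)" by (metis powr_realpow zero_less_numeral)
        then have "((2::real) ^ Suc n) powr p = 2 powr (real (Suc n) * p)" by (simp add: powr_powr)
        then show ?thesis using dpos dp by (simp add: kdiff powr_divide)
      qed
      have e3: "\<phi>0 powr \<beta> = \<phi>0 * \<phi>0 powr (\<beta> - 1)"
        using \<phi>0 by (simp add: powr_diff)
      have e4: "2 powr (- (real n * \<mu>) * \<beta>) * 2 powr (real (Suc n) * p) = 2 powr (- (real (Suc n) * \<mu>)) * 2 powr (\<mu> * \<beta>)"
      proof -
        have "- (real n * \<mu>) * \<beta> + real (Suc n) * p = - (real (Suc n) * \<mu>) + \<mu> * \<beta>"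
        proof -
          have h: "real n * \<mu> * \<beta> = real n * (\<mu> + p)" by (simp add: \<mu>\<beta>[symmetric] mult.assoc)
          have "- (real n * \<mu>) * \<beta> + real (Suc n) * p = - (real n * (\<mu> + p)) + real (Suc n) * p"
            using h by simp
          also have "\<dots> = - (real (Suc n) * \<mu>) + (\<mu> + p)" by (simp add: algebra_simps)
          finally show ?thesis using \<mu>\<beta> by simp
        qed
        then show ?thesis by (simp flip: powr_add)
      qed
      have gen: "\<And>X Y Z P. P > 0 \<Longrightarrow> Z > 0 \<Longrightarrow> Y > 0 \<Longrightarrow>
          C * ((\<phi>0 * P) * X) / ((C * P * Z) / Y) = \<phi>0 * (X * Y) / Z"
        using C by (simp add: field_simps)
      have "C * (\<phi>0 * 2 powr (- (real n * \<mu>))) powr \<beta> / (k (Suc n) - k n) powr p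
          = C * ((\<phi>0 * \<phi>0 powr (\<beta> - 1)) * 2 powr (- (real n * \<mu>) * \<beta>)) /
             ((C * \<phi>0 powr (\<beta> - 1) * 2 powr (\<mu> * \<beta>)) / 2 powr (real (Suc n) * p))"
        by (simp only: e1 e2 e3 D_def)
      also have "\<dots> = \<phi>0 * (2 powr (- (real n * \<mu>) * \<beta>) * 2 powr (real (Suc n) * p)) / 2 powr (\<mu> * \<beta>)"
        by (rule gen) (use \<phi>0 in auto)
      also have "\<dots> = \<phi>0 * 2 powr (- (real (Suc n) * \<mu>))"
        by (simp only: e4) simp
      finally show ?thesis .
    qed
    finally show ?case .
  qed
  have lim: "(\<lambda>n. \<phi>0 * 2 powr (- (real n * \<mu>))) \<longlonglongrightarrow> 0"
  proof -
    have eq: "2 powr (- (real n * \<mu>)) = (2 powr (-\<mu>)) ^ n" for n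
      by (simp add: powr_power mult.commute)
    have "(\<lambda>n. (2 powr (-\<mu>)) ^ n) \<longlonglongrightarrow> 0"
      apply (rule LIMSEQ_power_zero) using \<mu> by (simp add: powr_less_one)
    then show ?thesis unfolding eq by (auto intro: tendsto_mult_right_zero)
  qed
  have "\<phi> (k0 + d) \<le> \<phi>0 * 2 powr (- (real n * \<mu>))" for n
    using mono[OF kge[of n] kle[of n]] main[of n] by linarith
  then have "\<phi> (k0 + d) \<le> 0"
    using lim by (metis (mono_tags) LIMSEQ_le_const)
  moreover have "\<phi> (k0 + d) \<ge> 0" using nonneg dpos by auto
  ultimately show ?thesis using dpos by (intro exI[of _ "k0 + d"]) auto
qed

lemma amgm3:
  fixes x y z \<alpha> \<beta> \<gamma> :: real
  assumes "x \<ge> 0" "y \<ge> 0" "z \<ge> 0" "\<alpha> > 0" "\<beta> > 0" "\<gamma> > 0" "\<alpha> + \<beta> + \<gamma> = 1"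
  shows "x powr \<alpha> * y powr \<beta> * z powr \<gamma> \<le> \<alpha> * x + \<beta> * y + \<gamma> * z"
proof (cases "x = 0 \<or> y = 0 \<or> z = 0")
  case True
  have z1: "x powr \<alpha> * y powr \<beta> * z powr \<gamma> = 0" using True by (elim disjE) auto
  have z2: "0 \<le> \<alpha> * x + \<beta> * y + \<gamma> * z" using assms by simp
  show ?thesis unfolding z1 using z2 .
next
  case False
  then have pos: "x > 0" "y > 0" "z > 0" using assms by auto
  define s where "s = \<beta> + \<gamma>"
  have s: "s > 0" "\<alpha> + s = 1" using assms s_def by auto
  define w where "w = y powr (\<beta> / s) * z powr (\<gamma> / s)"
  have w: "w > 0" using pos w_def by auto
  have "w powr s = y powr \<beta> * z powr \<gamma>"
    using pos s by (simp add: w_def powr_mult powr_powr)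
  then have "x powr \<alpha> * y powr \<beta> * z powr \<gamma> = x powr \<alpha> * w powr s" by simp
  also have "\<dots> \<le> \<alpha> * x + s * w"
    using Youngs_inequality_0[of \<alpha> s x w] assms pos w s by auto
  also have "s * w \<le> \<beta> * y + \<gamma> * z"
  proof -
    have "w \<le> (\<beta> / s) * y + (\<gamma> / s) * z"
      unfolding w_def using Youngs_inequality_0[of "\<beta>/s" "\<gamma>/s" y z] assms pos s
      by (auto simp: s_def add_divide_distrib[symmetric])
    then have "s * w \<le> s * ((\<beta> / s) * y + (\<gamma> / s) * z)" using s by simp
    also have "\<dots> = \<beta> * y + \<gamma> * z" using s by (simp add: field_simps)
    finally show ?thesis .
  qed
  finally show ?thesis by simp
qed

lemma holder3:
  fixes M :: "'a measure" and a b :: "'a \<Rightarrow> real" and A :: "'a set" and p q :: real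
  assumes am: "a \<in> borel_measurable M" and bm: "b \<in> borel_measurable M"
    and a0: "\<And>x. a x \<ge> 0" and b0: "\<And>x. b x \<ge> 0"
    and ia: "integrable M (\<lambda>x. a x powr q)" and ib: "integrable M (\<lambda>x. b x powr p)"
    and A: "A \<in> sets M" "emeasure M A < \<infinity>"
    and bA: "\<And>x. x \<in> space M \<Longrightarrow> x \<notin> A \<Longrightarrow> b x = 0"
    and q: "q > 0" and p: "p > 0" and \<theta>: "1/q + 1/p < 1"
  shows "integrable M (\<lambda>x. a x * b x) \<and>
    (\<integral>x. a x * b x \<partial>M) \<le> (\<integral>x. a x powr q \<partial>M) powr (1/q) * (\<integral>x. b x powr p \<partial>M) powr (1/p)
       * measure M A powr (1 - 1/q - 1/p)"
proof -
  define Fa where "Fa = (\<integral>x. a x powr q \<partial>M)"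
  define Fb where "Fb = (\<integral>x. b x powr p \<partial>M)"
  define m where "m = measure M A"
  define \<theta> where "\<theta> = 1 - 1/q - 1/p"
  have \<theta>pos: "\<theta> > 0" using \<theta> \<theta>_def by simp
  have Fa0: "Fa \<ge> 0" unfolding Fa_def by (intro integral_nonneg_AE) simp
  have Fb0: "Fb \<ge> 0" unfolding Fb_def by (intro integral_nonneg_AE) simp
  have m0: "m \<ge> 0" unfolding m_def by simp
  have abm: "(\<lambda>x. a x * b x) \<in> borel_measurable M" using am bm by measurable
  have RHS0: "0 \<le> Fa powr (1/q) * Fb powr (1/p) * m powr \<theta>" by simp
  show ?thesis
  proof (cases "Fa = 0 \<or> Fb = 0 \<or> m = 0")
    case True
    have "AE x in M. a x * b x = 0"
    proof -
      { assume "Fa = 0"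
        then have "AE x in M. a x powr q = 0"
          using integral_nonneg_eq_0_iff_AE[OF ia] a0 unfolding Fa_def by auto
        then have ?thesis by eventually_elim simp }
      moreover
      { assume "Fb = 0"
        then have "AE x in M. b x powr p = 0"
          using integral_nonneg_eq_0_iff_AE[OF ib] b0 unfolding Fb_def by auto
        then have ?thesis by eventually_elim simp }
      moreover
      { assume "m = 0"
        then have "emeasure M A = 0" using A unfolding m_def
          by (simp add: emeasure_eq_ennreal_measure)
        then have "AE x in M. x \<notin> A"
          using A by (intro AE_I'[of A]) auto
        then have ?thesis by (rule AE_mp) (auto intro!: AE_I2 simp: bA) }
      ultimately show ?thesis using True by blast
    qed
    then have int: "integrable M (\<lambda>x. a x * b x)" and zero: "(\<integral>x. a x * b x \<partial>M) = 0"
      using integrable_cong_AE[OF abm, of "\<lambda>x. 0"] by (auto intro: integral_eq_zero_AE)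
    show ?thesis using int zero RHS0 unfolding Fa_def Fb_def m_def \<theta>_def by simp
  next
    case False
    then have pos: "Fa > 0" "Fb > 0" "m > 0" using Fa0 Fb0 m0 by auto
    define K where "K = Fa powr (1/q) * Fb powr (1/p) * m powr \<theta>"
    have Kpos: "K > 0" using pos K_def by simp
    define g where "g x = K * ((1/q) * (a x powr q / Fa) + (1/p) * (b x powr p / Fb) + \<theta> * (indicator A x / m))" for x
    have iA: "integrable M (indicator A :: 'a \<Rightarrow> real)" using A by (intro integrable_real_indicator) auto
    have ig: "integrable M g" unfolding g_def using ia ib iA by auto
    have intg: "(\<integral>x. g x \<partial>M) = K"
    proof -
      have "(\<integral>x. g x \<partial>M) = K * ((1/q) * (Fa / Fa) + (1/p) * (Fb / Fb) + \<theta> * (m / m))"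
        unfolding g_def Fa_def Fb_def m_def using ia ib iA A by (simp add: less_top[symmetric])
      also have "\<dots> = K" using pos \<theta>_def by simp
      finally show ?thesis .
    qed
    have pw: "a x * b x \<le> g x" if xsp: "x \<in> space M" for x
    proof (cases "b x = 0")
      case True
      have "0 \<le> g x" unfolding g_def using Kpos pos \<theta>pos q p
        by (intro mult_nonneg_nonneg add_nonneg_nonneg) auto
      then show ?thesis using True by simp
    next
      case False
      then have xA: "x \<in> A" using bA xsp by blast
      have ea: "(a x powr q / Fa) powr (1/q) * Fa powr (1/q) = a x"
      proof (cases "a x = 0")
        case True then show ?thesis using q by simp
      next
        case False
        then have "a x > 0" using a0 by (simp add: order_neq_le_trans)
        then show ?thesis using pos q by (simp add: powr_divide powr_powr)
      qed
      have eb: "(b x powr p / Fb) powr (1/p) * Fb powr (1/p) = b x"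
      proof -
        have "b x > 0" using False b0 by (simp add: order_neq_le_trans)
        then show ?thesis using pos p by (simp add: powr_divide powr_powr)
      qed
      have em: "(indicator A x / m) powr \<theta> * m powr \<theta> = 1"
        using xA pos by (simp add: powr_divide)
      define X where "X = a x powr q / Fa"
      define Y where "Y = b x powr p / Fb"
      define Z where "Z = indicator A x / m"
      have ac: "\<And>a b c d e f :: real. (a*b)*((c*d)*(e*f)) = (b*d*f)*(a*c*e)" by (simp add: ac_simps)
      have "a x * b x = (X powr (1/q) * Fa powr (1/q)) * ((Y powr (1/p) * Fb powr (1/p)) * (Z powr \<theta> * m powr \<theta>))"
        unfolding X_def Y_def Z_def ea eb em by simp
      also have "\<dots> = K * (X powr (1/q) * Y powr (1/p) * Z powr \<theta>)"
        unfolding K_def by (rule ac)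
      also have "\<dots> \<le> K * ((1/q) * X + (1/p) * Y + \<theta> * Z)"
      proof (rule mult_left_mono)
        show "X powr (1/q) * Y powr (1/p) * Z powr \<theta> \<le> (1/q) * X + (1/p) * Y + \<theta> * Z"
        proof (rule amgm3)
          show "0 \<le> X" unfolding X_def using pos by simp
          show "0 \<le> Y" unfolding Y_def using pos by simp
          show "0 \<le> Z" unfolding Z_def using pos by simp
          show "0 < 1/q" using q by simp
          show "0 < 1/p" using p by simp
          show "0 < \<theta>" by (rule \<theta>pos)
          show "1/q + 1/p + \<theta> = 1" unfolding \<theta>_def by simp
        qed
        show "0 \<le> K" using Kpos by simp
      qed
      also have "\<dots> = g x" unfolding g_def X_def Y_def Z_def by simp
      finally show ?thesis .
    qed
    have int: "integrable M (\<lambda>x. a x * b x)"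
    proof (rule Bochner_Integration.integrable_bound[OF ig abm])
      show "AE x in M. norm (a x * b x) \<le> norm (g x)"
      proof (intro AE_I2)
        fix x assume xsp: "x \<in> space M"
        have "norm (a x * b x) = a x * b x" using a0[of x] b0[of x] by simp
        also have "\<dots> \<le> g x" by (rule pw[OF xsp])
        also have "\<dots> \<le> norm (g x)" by simp
        finally show "norm (a x * b x) \<le> norm (g x)" .
      qed
    qed
    have "(\<integral>x. a x * b x \<partial>M) \<le> (\<integral>x. g x \<partial>M)"
      by (rule integral_mono[OF int ig]) (use pw in auto)
    then show ?thesis using int intg unfolding K_def Fa_def Fb_def m_def \<theta>_def by simp
  qed
qed

lemma memL2_dom:
  assumes "memL2 M a" "b \<in> borel_measurable M" "\<And>x. \<bar>b x\<bar> \<le> \<bar>a x\<bar>"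
  shows "memL2 M b"
proof -
  have ia: "integrable M (\<lambda>x. (a x)^2)" using assms(1) unfolding memL2_def by auto
  have "integrable M (\<lambda>x. (b x)^2)"
  proof (rule Bochner_Integration.integrable_bound[OF ia])
    show "(\<lambda>x. (b x)^2) \<in> borel_measurable M" using assms(2) by measurable
    show "AE x in M. norm ((b x)^2) \<le> norm ((a x)^2)"
      using assms(3) by (auto intro!: AE_I2 simp: abs_le_square_iff)
  qed
  then show ?thesis using assms(2) unfolding memL2_def by auto
qed

lemma L2_prod:
  assumes "memL2 M a" "memL2 M b"
  shows "integrable M (\<lambda>x. a x * b x)"
proof -
  have ia: "integrable M (\<lambda>x. (a x)^2 + (b x)^2)" using assms unfolding memL2_def by auto
  show ?thesis
  proof (rule Bochner_Integration.integrable_bound[OF ia])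
    have [measurable]: "a \<in> borel_measurable M" "b \<in> borel_measurable M"
      using assms unfolding memL2_def by auto
    show "(\<lambda>x. a x * b x) \<in> borel_measurable M" by measurable
    show "AE x in M. norm (a x * b x) \<le> norm ((a x)^2 + (b x)^2)"
    proof (intro AE_I2)
      fix x
      have "2 * \<bar>a x\<bar> * \<bar>b x\<bar> \<le> (a x)^2 + (b x)^2"
        using sum_squares_bound[of "\<bar>a x\<bar>" "\<bar>b x\<bar>"] by simp
      moreover have "\<bar>a x\<bar> * \<bar>b x\<bar> \<ge> 0" by simp
      ultimately have "\<bar>a x\<bar> * \<bar>b x\<bar> \<le> (a x)^2 + (b x)^2" by linarith
      then show "norm (a x * b x) \<le> norm ((a x)^2 + (b x)^2)"
        by (simp add: abs_mult)
    qed
  qed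
qed

lemma enn_aux:
  fixes a b c :: ennreal and G :: real
  assumes "a + b \<le> c" "c < \<infinity>" "ereal (- G) \<le> enn2ereal a - enn2ereal c"
  shows "b < \<infinity> \<and> enn2real b \<le> G"
proof -
  have ab: "a + b < \<infinity>" using assms(1,2) by (rule le_less_trans)
  then have fa: "a < \<infinity>" "b < \<infinity>" by (auto simp: top_unique less_top)
  obtain a' where a': "a = ennreal a'" "a' \<ge> 0" using fa(1) by (cases a) auto
  obtain b' where b': "b = ennreal b'" "b' \<ge> 0" using fa(2) by (cases b) auto
  obtain c' where c': "c = ennreal c'" "c' \<ge> 0" using assms(2) by (cases c) auto
  have "ennreal (a' + b') \<le> ennreal c'" using assms(1) a' b' c' by (simp add: ennreal_plus)
  then have 1: "a' + b' \<le> c'" using c' by (simp add: ennreal_le_iff)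
  have "ereal (- G) \<le> ereal a' - ereal c'" using assms(3) a' b' c' by (simp add: enn2ereal_ennreal)
  then have 2: "- G \<le> a' - c'" by simp
  show ?thesis using 1 2 b' fa by simp
qed


definition trunc :: "real \<Rightarrow> real \<Rightarrow> real" where
  "trunc k t = (if t > k then (t - k) / 2 else if t < - k then (t + k) / 2 else 0)"

lemma trunc_eq: "k > 0 \<Longrightarrow> t - 1/2 * (posp (t + k) - negp (t - k)) = trunc k t"
  by (auto simp: trunc_def posp_def negp_def max_def field_simps)

lemma trunc_abs: "k > 0 \<Longrightarrow> \<bar>trunc k t\<bar> \<le> \<bar>t\<bar>"
  by (auto simp: trunc_def)

lemma trunc_zero: "\<bar>t\<bar> \<le> k \<Longrightarrow> trunc k t = 0"
  by (auto simp: trunc_def)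

lemma trunc_big: "k > 0 \<Longrightarrow> k < h \<Longrightarrow> h < \<bar>t\<bar> \<Longrightarrow> (h - k) / 2 \<le> \<bar>trunc k t\<bar>"
  unfolding trunc_def by (cases "t > k"; cases "t < -k") auto

lemma trunc_prod: "k > 0 \<Longrightarrow> 2 * (trunc k t)^2 \<le> t * trunc k t"
proof -
  assume k: "k > 0"
  consider "t > k" | "t < -k" | "\<bar>t\<bar> \<le> k" by linarith
  then show ?thesis
  proof cases
    case 1
    have h: "(t - k) * k \<ge> 0" using 1 k by simp
    have "t * ((t - k) / 2) - 2 * ((t - k) / 2)^2 = (t - k) * k / 2"
      by (simp add: power2_eq_square field_simps)
    then have "2 * ((t - k) / 2)^2 \<le> t * ((t - k) / 2)" using h by linarith
    then show ?thesis using 1 by (simp add: trunc_def)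
  next
    case 2
    have h: "(t + k) * k \<le> 0" using 2 k by (simp add: mult_nonpos_nonneg)
    have "t * ((t + k) / 2) - 2 * ((t + k) / 2)^2 = - ((t + k) * k / 2)"
      by (simp add: power2_eq_square field_simps)
    then have "2 * ((t + k) / 2)^2 \<le> t * ((t + k) / 2)" using h by linarith
    then show ?thesis using 2 k by (simp add: trunc_def)
  next
    case 3 then show ?thesis by (simp add: trunc_zero)
  qed
qed

lemma trunc_meas [measurable]: "(\<lambda>x. trunc k (u x)) \<in> borel_measurable M" if [measurable]: "u \<in> borel_measurable M"
  unfolding trunc_def by measurable

lemma trunc_diff_abs: "k > 0 \<Longrightarrow> \<bar>t - trunc k t\<bar> \<le> \<bar>t\<bar>"
  unfolding trunc_def by (cases "t > k"; cases "t < -k") auto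

lemma alg:
  fixes J m C1 C2 I r p \<theta> :: real
  assumes J: "J \<ge> 0" and m: "m \<ge> 0" and C1: "C1 \<ge> 0" and C2: "C2 \<ge> 0" and I: "I \<ge> 0"
    and r: "r > 1" and p: "p > 0"
    and h1: "J \<le> C1 * I powr (p / r)" and h2: "I \<le> C2 * J powr (1 / p) * m powr \<theta>"
  shows "J \<le> (C1 * C2 powr (p / r)) powr (r / (r - 1)) * m powr (\<theta> * p / (r - 1))"
proof (cases "J = 0")
  case True then show ?thesis by simp
next
  case False
  then have Jpos: "J > 0" using J by simp
  have "I powr (p / r) \<le> (C2 * J powr (1 / p) * m powr \<theta>) powr (p / r)"
    using I h2 p r by (intro powr_mono2) auto
  also have "\<dots> = C2 powr (p / r) * J powr (1 / r) * m powr (\<theta> * p / r)"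
    using C2 J m p r by (simp add: powr_mult powr_powr)
  finally have "J \<le> C1 * (C2 powr (p / r) * J powr (1 / r) * m powr (\<theta> * p / r))"
    using h1 C1 by (meson mult_left_mono order_trans)
  then have "J \<le> (C1 * C2 powr (p / r) * m powr (\<theta> * p / r)) * J powr (1 / r)"
    by (simp add: ac_simps)
  moreover have "J = J powr (1 - 1 / r) * J powr (1 / r)"
    using Jpos by (simp flip: powr_add)
  ultimately have "J powr (1 - 1 / r) * J powr (1 / r) \<le> (C1 * C2 powr (p / r) * m powr (\<theta> * p / r)) * J powr (1 / r)"
    by simp
  then have le: "J powr (1 - 1 / r) \<le> C1 * C2 powr (p / r) * m powr (\<theta> * p / r)"
    using Jpos by (simp add: mult_le_cancel_right)
  have "J = (J powr (1 - 1 / r)) powr (r / (r - 1))"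
    using Jpos r by (simp add: powr_powr field_simps)
  also have "\<dots> \<le> (C1 * C2 powr (p / r) * m powr (\<theta> * p / r)) powr (r / (r - 1))"
    using le r by (intro powr_mono2) auto
  also have "\<dots> = (C1 * C2 powr (p / r)) powr (r / (r - 1)) * m powr (\<theta> * p / (r - 1))"
  proof -
    have ex: "\<theta> * p / r * (r / (r - 1)) = \<theta> * p / (r - 1)" using r by (simp add: field_simps)
    show ?thesis using C1 C2 m r by (simp add: powr_mult powr_powr ex)
  qed
  finally show ?thesis .
qed


lemma markov_set:
  fixes h :: "'a \<Rightarrow> real"
  assumes ih: "integrable M h" and h0: "\<And>x. x \<in> space M \<Longrightarrow> 0 \<le> h x" and c: "c > 0"
    and B: "B \<in> sets M" and Bc: "\<And>x. x \<in> B \<Longrightarrow> c \<le> h x"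
  shows "emeasure M B < \<infinity> \<and> measure M B \<le> (\<integral>x. h x \<partial>M) / c"
proof -
  have hm[measurable]: "h \<in> borel_measurable M" using ih by auto
  have sub: "B \<subseteq> {x\<in>space M. h x \<ge> c}" using Bc sets.sets_into_space[OF B] by auto
  have "emeasure M B \<le> emeasure M {x\<in>space M. h x \<ge> c}"
    by (rule emeasure_mono[OF sub]) measurable
  also have "\<dots> \<le> ennreal ((1/c) * (\<integral>x. h x \<partial>M))"
    by (rule integral_Markov_inequality) (use ih h0 c in auto)
  finally have le: "emeasure M B \<le> ennreal ((1/c) * (\<integral>x. h x \<partial>M))" .
  then have fin: "emeasure M B < \<infinity>" using le_less_trans by fastforce
  have "ennreal (measure M B) = emeasure M B"
    using fin by (intro emeasure_eq_ennreal_measure[symmetric]) auto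
  also note le
  finally have "measure M B \<le> (1/c) * (\<integral>x. h x \<partial>M)"
    using c by (subst (asm) ennreal_le_iff) (auto simp: integral_nonneg_AE h0)
  then show ?thesis using fin by simp
qed

theorem mainTheorem7:
  fixes M :: "('a::t2_space) measure"
    and E :: "('a \<Rightarrow> real) \<Rightarrow> ennreal"
    and r q p lam :: real
    and f u :: "'a \<Rightarrow> real"
  assumes borelM: "sets M = sets borel"
    and full_support: "\<forall>U. open U \<longrightarrow> U \<noteq> {} \<longrightarrow> emeasure M U \<noteq> 0"
    and dir: "dirichlet_form M E"
    and ev: "even_form E M"
    and r: "r \<ge> 2" and growth: "growth_type_at_most M E r"
    and q: "q \<ge> 2" and lam: "lam > 0"
    and f2: "memL2 M f" and fq: "memLp q M f"
    and u2: "memL2 M u"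
    and sol: "(u, (\<lambda>x. f x - lam * u x)) \<in> subgradient M E"
    and p: "p \<ge> 2" and pqr: "(1 - 2 / q) * (p / r) > 1"
    and emb: "embeds_continuously_Lp M E p"
  shows "memLinf M u"
proof -
  define g where "g = (\<lambda>x. f x - lam * u x)"
  have um[measurable]: "u \<in> borel_measurable M" using u2 unfolding memL2_def by auto
  have fm[measurable]: "f \<in> borel_measurable M" using f2 unfolding memL2_def by auto
  have iu2: "integrable M (\<lambda>x. (u x)^2)" using u2 unfolding memL2_def by auto
  have if2: "integrable M (\<lambda>x. (f x)^2)" using f2 unfolding memL2_def by auto
  have conv: "\<And>v w t. memL2 M v \<Longrightarrow> memL2 M w \<Longrightarrow> 0 \<le> t \<Longrightarrow> t \<le> 1 \<Longrightarrow>
      E (\<lambda>x. t * v x + (1 - t) * w x) \<le> ennreal t * E v + ennreal (1 - t) * E w"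
    using dir unfolding dirichlet_form_def by blast
  have d2: "\<And>v w \<alpha>. memL2 M v \<Longrightarrow> memL2 M w \<Longrightarrow> \<alpha> > 0 \<Longrightarrow>
      E (\<lambda>x. w x + (1/2) * (posp (v x - w x + \<alpha>) - negp (v x - w x - \<alpha>))) +
      E (\<lambda>x. v x - (1/2) * (posp (v x - w x + \<alpha>) - negp (v x - w x - \<alpha>))) \<le> E v + E w"
    using dir unfolding dirichlet_form_def Let_def by blast
  have E0: "E (\<lambda>x. 0) = 0" using ev unfolding even_form_def by blast
  have gr: "\<And>w l. memL2 M w \<Longrightarrow> l \<ge> 1 \<Longrightarrow> E (\<lambda>x. l * w x) \<le> ennreal (l powr r) * E w"
    using growth unfolding growth_type_at_most_def by blast
  have Eu: "E u < \<infinity>" and g2: "memL2 M g"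
    and sg: "\<And>v. memL2 M v \<Longrightarrow> ereal (L2_inner M g (\<lambda>x. v x - u x)) \<le> enn2ereal (E v) - enn2ereal (E u)"
    using sol unfolding subgradient_def g_def by auto
  have embLp: "\<And>w. w \<in> dirichlet_space M E \<Longrightarrow> memLp p M w"
    using emb unfolding embeds_continuously_Lp_def by blast
  obtain c where embc: "\<And>w. w \<in> dirichlet_space M E \<Longrightarrow> Lp_norm p M w \<le> c * D_norm M E w"
    using emb unfolding embeds_continuously_Lp_def by blast
  define T where "T k x = trunc k (u x)" for k x
  have Tm[measurable]: "T k \<in> borel_measurable M" for k unfolding T_def by measurable
  have TL2: "memL2 M (T k)" if "k > 0" for k
    by (rule memL2_dom[OF u2 Tm]) (simp add: T_def trunc_abs that)
  have energy: "E (T k) < \<infinity> \<and> enn2real (E (T k)) + 2 * lam * (\<integral>x. (T k x)^2 \<partial>M) \<le> (\<integral>x. f x * T k x \<partial>M)"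
    if k: "k > 0" for k
  proof -
    have vL2: "memL2 M (\<lambda>x. u x - T k x)"
      by (rule memL2_dom[OF u2]) (auto simp: T_def trunc_diff_abs k)
    have e1: "(\<lambda>x. 0 + (1/2) * (posp (u x - 0 + k) - negp (u x - 0 - k))) = (\<lambda>x. u x - T k x)"
    proof (rule ext)
      fix x show "0 + (1/2) * (posp (u x - 0 + k) - negp (u x - 0 - k)) = u x - T k x"
        unfolding T_def trunc_eq[OF k, of "u x", symmetric] by simp
    qed
    have e2: "(\<lambda>x. u x - (1/2) * (posp (u x - 0 + k) - negp (u x - 0 - k))) = T k"
    proof (rule ext)
      fix x show "u x - (1/2) * (posp (u x - 0 + k) - negp (u x - 0 - k)) = T k x"
        unfolding T_def trunc_eq[OF k, of "u x", symmetric] by simp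
    qed
    have zL2: "memL2 M (\<lambda>x. 0)" unfolding memL2_def by simp
    have h2: "E (\<lambda>x. u x - T k x) + E (T k) \<le> E u"
      using d2[OF u2 zL2 k] unfolding e1 e2 E0 by simp
    have inner: "L2_inner M g (\<lambda>x. (u x - T k x) - u x) = - (\<integral>x. g x * T k x \<partial>M)"
      unfolding L2_inner_def by (simp flip: integral_minus)
    have "ereal (- (\<integral>x. g x * T k x \<partial>M)) \<le> enn2ereal (E (\<lambda>x. u x - T k x)) - enn2ereal (E u)"
      using sg[OF vL2] unfolding inner .
    from enn_aux[OF h2 Eu this]
    have fin: "E (T k) < \<infinity>" and eT: "enn2real (E (T k)) \<le> (\<integral>x. g x * T k x \<partial>M)" by auto
    have ifT: "integrable M (\<lambda>x. f x * T k x)" by (rule L2_prod[OF f2 TL2[OF k]])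
    have iuT: "integrable M (\<lambda>x. u x * T k x)" by (rule L2_prod[OF u2 TL2[OF k]])
    have iTT: "integrable M (\<lambda>x. (T k x)^2)" using TL2[OF k] unfolding memL2_def by auto
    have "(\<integral>x. g x * T k x \<partial>M) = (\<integral>x. f x * T k x - lam * (u x * T k x) \<partial>M)"
      unfolding g_def by (simp add: algebra_simps)
    also have "\<dots> = (\<integral>x. f x * T k x \<partial>M) - lam * (\<integral>x. u x * T k x \<partial>M)"
      using ifT iuT by simp
    finally have gT: "(\<integral>x. g x * T k x \<partial>M) = (\<integral>x. f x * T k x \<partial>M) - lam * (\<integral>x. u x * T k x \<partial>M)" .
    have "(\<integral>x. 2 * (T k x)^2 \<partial>M) \<le> (\<integral>x. u x * T k x \<partial>M)"
      by (rule integral_mono) (use iTT iuT trunc_prod[OF k] in \<open>auto simp: T_def\<close>)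
    then have "2 * (\<integral>x. (T k x)^2 \<partial>M) \<le> (\<integral>x. u x * T k x \<partial>M)" by simp
    then have "lam * (2 * (\<integral>x. (T k x)^2 \<partial>M)) \<le> lam * (\<integral>x. u x * T k x \<partial>M)"
      using lam by (intro mult_left_mono) auto
    then show ?thesis using fin eT gT by (simp add: algebra_simps)
  qed
  have zL2: "memL2 M (\<lambda>x. 0)" unfolding memL2_def by simp
  define I where "I k = (\<integral>x. f x * T k x \<partial>M)" for k
  define J where "J k = (\<integral>x. \<bar>T k x\<bar> powr p \<partial>M)" for k
  have ET_fin: "E (T k) = ennreal (enn2real (E (T k)))" if k: "k > 0" for k
    using energy[OF k] by (simp add: less_top)
  have eT_le: "enn2real (E (T k)) \<le> I k" if k: "k > 0" for k
  proof -
    have "0 \<le> (\<integral>x. (T k x)^2 \<partial>M)" by simp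
    then have "0 \<le> 2 * lam * (\<integral>x. (T k x)^2 \<partial>M)" using lam by simp
    then show ?thesis using energy[OF k] unfolding I_def by linarith
  qed
  have T2_le: "2 * lam * (\<integral>x. (T k x)^2 \<partial>M) \<le> I k" if k: "k > 0" for k
  proof -
    have "0 \<le> enn2real (E (T k))" by simp
    then show ?thesis using energy[OF k] unfolding I_def by linarith
  qed
  have I0: "I k \<ge> 0" if k: "k > 0" for k
    using eT_le[OF k] by (meson enn2real_nonneg order_trans)
  define Bnd where "Bnd = (\<integral>x. ((f x)^2 + (u x)^2) / 2 \<partial>M) + 1"
  have ifu: "integrable M (\<lambda>x. ((f x)^2 + (u x)^2) / 2)" using if2 iu2 by simp
  have Bpos: "Bnd \<ge> 1" unfolding Bnd_def by (simp add: integral_nonneg_AE)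
  have IB: "I k \<le> Bnd" if k: "k > 0" for k
  proof -
    have "I k \<le> (\<integral>x. ((f x)^2 + (u x)^2) / 2 \<partial>M)"
      unfolding I_def
    proof (rule integral_mono[OF L2_prod[OF f2 TL2[OF k]] ifu])
      fix x
      have "f x * T k x \<le> \<bar>f x\<bar> * \<bar>T k x\<bar>" by (simp add: abs_mult[symmetric])
      also have "\<dots> \<le> \<bar>f x\<bar> * \<bar>u x\<bar>"
        by (intro mult_left_mono) (auto simp: T_def trunc_abs k)
      also have "\<dots> \<le> ((f x)^2 + (u x)^2) / 2"
        using sum_squares_bound[of "\<bar>f x\<bar>" "\<bar>u x\<bar>"] by simp
      finally show "f x * T k x \<le> ((f x)^2 + (u x)^2) / 2" .
    qed
    then show ?thesis unfolding Bnd_def by simp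
  qed
  define K where "K = 2 + Bnd powr (1 - 2/r) / lam + 2 * Bnd powr (1 - 1/r)"
  have K2: "K \<ge> 2" unfolding K_def using lam by (simp add: add_increasing)
  have K_a: "Bnd powr (1 - 2/r) \<le> lam * K"
  proof -
    have "Bnd powr (1 - 2/r) / lam \<le> K" unfolding K_def by simp
    then show ?thesis using lam by (simp add: divide_le_eq mult.commute)
  qed
  have K_b: "2 * Bnd powr (1 - 1/r) \<le> K" unfolding K_def using lam by simp
  have DS: "T k \<in> dirichlet_space M E" if k: "k > 0" for k
  proof -
    have "E1 M E (\<lambda>x. 1 * T k x) < \<infinity>"
      using energy[OF k] unfolding E1_def by simp
    then have "\<exists>l>0. E1 M E (\<lambda>x. l * T k x) < \<infinity>" by (intro exI[of _ 1]) simp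
    then show ?thesis unfolding dirichlet_space_def using TL2[OF k] by blast
  qed
  define c' where "c' = max c 0"
  have c': "c' \<ge> 0" unfolding c'_def by simp
  have J0: "J k \<ge> 0" for k unfolding J_def by (simp add: integral_nonneg_AE)
  have Jb: "J k \<le> (c' * K) powr p * I k powr (p / r)" if k: "k > 0" for k
  proof (cases "I k = 0")
    case True
    have iTT: "integrable M (\<lambda>x. (T k x)^2)" using TL2[OF k] unfolding memL2_def by auto
    have "2 * lam * (\<integral>x. (T k x)^2 \<partial>M) \<le> 0" using T2_le[OF k] True by simp
    then have "(\<integral>x. (T k x)^2 \<partial>M) \<le> 0" using lam by (simp add: mult_le_0_iff)
    then have "(\<integral>x. (T k x)^2 \<partial>M) = 0" by (simp add: antisym integral_nonneg_AE)
    then have "AE x in M. (T k x)^2 = 0"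
      using integral_nonneg_eq_0_iff_AE[OF iTT] by simp
    then have "AE x in M. \<bar>T k x\<bar> powr p = 0" by eventually_elim simp
    then have "J k = 0" unfolding J_def by (rule integral_eq_zero_AE)
    then show ?thesis using c' K2 by simp
  next
    case False
    then have Ipos: "I k > 0" using I0[OF k] by simp
    define l where "l = K * I k powr (1/r)"
    have lpos: "l > 0" unfolding l_def using K2 Ipos by simp
    have rpos: "r > 0" using r by simp
    define eT where "eT = enn2real (E (T k))"
    have eT0: "eT \<ge> 0" unfolding eT_def by simp
    have eTI: "eT \<le> I k" unfolding eT_def by (rule eT_le[OF k])
    have ETe: "E (T k) = ennreal eT" unfolding eT_def by (rule ET_fin[OF k])
    have iTT: "integrable M (\<lambda>x. (T k x)^2)" using TL2[OF k] unfolding memL2_def by auto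
    have sq: "(L2_norm M (\<lambda>x. T k x / l))^2 \<le> 1/2"
    proof -
      have int0: "0 \<le> (\<integral>x. (T k x / l)^2 \<partial>M)" by (simp add: integral_nonneg_AE)
      have "(L2_norm M (\<lambda>x. T k x / l))^2 = (\<integral>x. (T k x / l)^2 \<partial>M)"
        unfolding L2_norm_def using int0 by simp
      also have "\<dots> = (\<integral>x. (T k x)^2 \<partial>M) / l^2" by (simp add: power_divide)
      also have "\<dots> \<le> (I k / (2 * lam)) / l^2"
      proof (rule divide_right_mono)
        show "(\<integral>x. (T k x)^2 \<partial>M) \<le> I k / (2 * lam)"
          using T2_le[OF k] lam by (simp add: le_divide_eq mult.commute)
      qed simp
      also have "\<dots> = I k powr (1 - 2/r) / (2 * lam * K^2)"
      proof -
        have "l^2 = K^2 * I k powr (2/r)"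
          unfolding l_def using Ipos by (simp add: power_mult_distrib powr_realpow[symmetric] powr_powr)
        moreover have "I k = I k powr (1 - 2/r) * I k powr (2/r)"
          using Ipos by (simp flip: powr_add)
        ultimately show ?thesis using Ipos K2 lam
          by (simp add: field_simps)
      qed
      also have "\<dots> \<le> Bnd powr (1 - 2/r) / (2 * lam * K^2)"
        using IB[OF k] Ipos r K2 lam by (intro divide_right_mono powr_mono2) auto
      also have "\<dots> \<le> (lam * K) / (2 * lam * K^2)"
        using K_a K2 lam by (intro divide_right_mono) auto
      also have "\<dots> = 1 / (2 * K)" using lam K2 by (simp add: power2_eq_square)
      also have "\<dots> \<le> 1/2" using K2 by simp
      finally show ?thesis .
    qed
    have ET: "E (\<lambda>x. T k x / l) \<le> ennreal (1/2)"
    proof (cases "l \<le> 1")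
      case True
      have eqf: "(\<lambda>x. T k x / l) = (\<lambda>x. (1/l) * T k x)" by (simp add: field_simps)
      have "E (\<lambda>x. T k x / l) \<le> ennreal ((1/l) powr r) * E (T k)"
        unfolding eqf using gr[OF TL2[OF k], of "1/l"] True lpos by simp
      also have "\<dots> = ennreal ((1/l) powr r * eT)" unfolding ETe using eT0 by (simp add: ennreal_mult)
      also have "\<dots> \<le> ennreal (1/2)"
      proof (rule ennreal_leI)
        have lr: "l powr r = K powr r * I k" unfolding l_def using Ipos K2 rpos
          by (simp add: powr_mult powr_powr)
        have Kr: "K powr r \<ge> 2"
        proof -
          have "K powr 1 \<le> K powr r" using K2 r by (intro powr_mono) auto
          then show ?thesis using K2 by simp
        qed
        have "(1/l) powr r * eT \<le> (1/l) powr r * I k" using eTI by (simp add: mult_left_mono)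
        also have "\<dots> = I k / l powr r" using lpos by (simp add: powr_divide)
        also have "\<dots> = 1 / K powr r" unfolding lr using Ipos K2 by simp
        also have "\<dots> \<le> 1/2" using Kr by (simp add: divide_le_eq)
        finally show "(1/l) powr r * eT \<le> 1/2" .
      qed
      finally show ?thesis .
    next
      case False
      have eqf: "(\<lambda>x. T k x / l) = (\<lambda>x. (1/l) * T k x + (1 - 1/l) * 0)" by (simp add: field_simps)
      have "E (\<lambda>x. T k x / l) \<le> ennreal (1/l) * E (T k) + ennreal (1 - 1/l) * E (\<lambda>x. 0)"
        unfolding eqf using conv[OF TL2[OF k] zL2, of "1/l"] False lpos by simp
      also have "\<dots> = ennreal (eT / l)"
      proof -
        have "ennreal (1/l) * ennreal eT = ennreal ((1/l) * eT)" using ennreal_mult[of "1/l" eT] eT0 lpos by simp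
        then show ?thesis unfolding ETe E0 by simp
      qed
      also have "\<dots> \<le> ennreal (1/2)"
      proof (rule ennreal_leI)
        have "eT / l \<le> I k / l" using eTI lpos by (simp add: divide_right_mono)
        also have "\<dots> = I k powr (1 - 1/r) / K"
        proof -
          have "I k = I k powr (1 - 1/r) * I k powr (1/r)" using Ipos by (simp flip: powr_add)
          then show ?thesis unfolding l_def using Ipos K2 by (simp add: field_simps)
        qed
        also have "\<dots> \<le> Bnd powr (1 - 1/r) / K"
          using IB[OF k] Ipos r K2 by (intro divide_right_mono powr_mono2) auto
        also have "\<dots> \<le> 1/2" using K_b K2 by (simp add: divide_le_eq)
        finally show "eT / l \<le> 1/2" .
      qed
      finally show ?thesis .
    qed
    have E1le: "E1 M E (\<lambda>x. T k x / l) \<le> 1"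
    proof -
      have "E1 M E (\<lambda>x. T k x / l) \<le> ennreal (1/2) + ennreal (1/2)"
        unfolding E1_def using sq ET by (intro add_mono ennreal_leI) auto
      also have "\<dots> = ennreal (1/2 + 1/2)" by (rule ennreal_plus[symmetric]) auto
      also have "\<dots> = 1" by simp
      finally show ?thesis .
    qed
    define S where "S = {l. l > 0 \<and> E1 M E (\<lambda>x. T k x / l) \<le> 1}"
    have lS: "l \<in> S" unfolding S_def using lpos E1le by simp
    have bdd: "bdd_below S" unfolding S_def by (rule bdd_belowI[of _ 0]) auto
    have Dle: "D_norm M E (T k) \<le> l" unfolding D_norm_def S_def[symmetric]
      by (rule cInf_lower[OF lS bdd])
    have Dge: "D_norm M E (T k) \<ge> 0" unfolding D_norm_def S_def[symmetric]
      using lS by (intro cInf_greatest) (auto simp: S_def)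
    have "Lp_norm p M (T k) \<le> c * D_norm M E (T k)" by (rule embc[OF DS[OF k]])
    also have "\<dots> \<le> c' * D_norm M E (T k)" unfolding c'_def using Dge by (intro mult_right_mono) auto
    also have "\<dots> \<le> c' * l" using Dle c' by (intro mult_left_mono) auto
    finally have Lpl: "Lp_norm p M (T k) \<le> c' * l" .
    have "J k = (Lp_norm p M (T k)) powr p"
      unfolding Lp_norm_def J_def[symmetric] using J0[of k] p by (simp add: powr_powr)
    also have "\<dots> \<le> (c' * l) powr p"
      using Lpl p by (intro powr_mono2) (auto simp: Lp_norm_def)
    also have "\<dots> = (c' * K) powr p * I k powr (p / r)"
      unfolding l_def using c' K2 Ipos by (simp add: powr_mult powr_powr)
    finally show ?thesis .
  qed
  have q2: "q > 2"
  proof (rule ccontr)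
    assume "\<not> q > 2" then have "q = 2" using q by simp
    then show False using pqr by simp
  qed
  have rpos: "r > 0" using r by simp
  have key: "(1 - 2/q) * p > r"
    using pqr rpos by (simp add: field_simps)
  have pr: "p > r"
  proof -
    have "(1 - 2/q) * p \<le> p" using q2 p by (simp add: mult_left_le_one_le)
    then show ?thesis using key by simp
  qed
  define \<theta> where "\<theta> = 1 - 1/q - 1/p"
  define \<beta> where "\<beta> = \<theta> * p / (r - 1)"
  have \<theta>q: "1/q + 1/p < 1"
  proof -
    have "1/q < 1/2" using q2 by (simp add: divide_less_eq)
    moreover have "1/p \<le> 1/2" using p by (simp add: divide_le_eq)
    ultimately show ?thesis by simp
  qed
  have \<beta>1: "\<beta> > 1"
  proof -
    have "\<theta> * p = p - p/q - 1" unfolding \<theta>_def using p by (simp add: field_simps)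
    moreover have "p - p/q \<ge> (1 - 2/q) * p" using p q2 by (simp add: field_simps)
    ultimately have "\<theta> * p > r - 1" using key by simp
    then show ?thesis unfolding \<beta>_def using r by (simp add: field_simps)
  qed
  define A where "A k = {x \<in> space M. k < \<bar>u x\<bar>}" for k
  have Asets: "A k \<in> sets M" for k unfolding A_def by measurable
  have Afin: "emeasure M (A k) < \<infinity>" if k: "k > 0" for k
  proof -
    have "emeasure M (A k) < \<infinity> \<and> measure M (A k) \<le> (\<integral>x. (u x)^2 \<partial>M) / k^2"
    proof (rule markov_set[OF iu2 _ _ Asets])
      fix x assume "x \<in> A k"
      then have "k < \<bar>u x\<bar>" unfolding A_def by simp
      then have "k^2 \<le> \<bar>u x\<bar>^2" using k by (intro power_mono) auto
      then show "k^2 \<le> (u x)^2" by simp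
    qed (use k in auto)
    then show ?thesis by simp
  qed
  define m where "m k = measure M (A k)" for k
  define Fq where "Fq = (\<integral>x. \<bar>f x\<bar> powr q \<partial>M)"
  have ifq: "integrable M (\<lambda>x. \<bar>f x\<bar> powr q)" using fq unfolding memLp_def by auto
  have hold: "I k \<le> Fq powr (1/q) * J k powr (1/p) * m k powr \<theta>" if k: "k > 0" for k
  proof -
    have iTp: "integrable M (\<lambda>x. \<bar>T k x\<bar> powr p)" using embLp[OF DS[OF k]] unfolding memLp_def by auto
    have H: "integrable M (\<lambda>x. \<bar>f x\<bar> * \<bar>T k x\<bar>) \<and>
      (\<integral>x. \<bar>f x\<bar> * \<bar>T k x\<bar> \<partial>M) \<le> (\<integral>x. \<bar>f x\<bar> powr q \<partial>M) powr (1/q) * (\<integral>x. \<bar>T k x\<bar> powr p \<partial>M) powr (1/p)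
       * measure M (A k) powr (1 - 1/q - 1/p)"
    proof (rule holder3[where M=M and a="\<lambda>x. \<bar>f x\<bar>" and b="\<lambda>x. \<bar>T k x\<bar>" and A="A k" and q=q and p=p])
      show "\<And>x. x \<in> space M \<Longrightarrow> x \<notin> A k \<Longrightarrow> \<bar>T k x\<bar> = 0"
        unfolding A_def T_def by (auto simp: trunc_zero)
    qed (use ifq iTp Asets Afin[OF k] q2 p \<theta>q in auto)
    have "I k \<le> (\<integral>x. \<bar>f x\<bar> * \<bar>T k x\<bar> \<partial>M)"
      unfolding I_def
      by (rule integral_mono[OF L2_prod[OF f2 TL2[OF k]]]) (use H in \<open>auto simp: abs_mult[symmetric]\<close>)
    then show ?thesis using H unfolding Fq_def J_def m_def \<theta>_def by simp
  qed
  define C1 where "C1 = (c' * K) powr p"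
  define C3 where "C3 = (C1 * (Fq powr (1/q)) powr (p / r)) powr (r / (r - 1))"
  have C3: "C3 \<ge> 0" unfolding C3_def by simp
  have Jm: "J k \<le> C3 * m k powr \<beta>" if k: "k > 0" for k
    unfolding C3_def \<beta>_def
    by (rule alg[OF J0 _ _ _ I0[OF k] _ _ Jb[OF k, folded C1_def] hold[OF k]])
       (use r p in \<open>auto simp: m_def C1_def\<close>)
  have cheb: "((h - k) / 2) powr p * m h \<le> J k" if k: "k > 0" and kh: "k < h" for k h
  proof -
    have iTp: "integrable M (\<lambda>x. \<bar>T k x\<bar> powr p)" using embLp[OF DS[OF k]] unfolding memLp_def by auto
    have cpos: "((h - k) / 2) powr p > 0" using kh by simp
    have "emeasure M (A h) < \<infinity> \<and> measure M (A h) \<le> (\<integral>x. \<bar>T k x\<bar> powr p \<partial>M) / ((h - k) / 2) powr p"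
    proof (rule markov_set[OF iTp _ cpos Asets])
      fix x assume "x \<in> A h"
      then have "h < \<bar>u x\<bar>" unfolding A_def by simp
      then have "(h - k) / 2 \<le> \<bar>T k x\<bar>" unfolding T_def using trunc_big k kh by blast
      then show "((h - k) / 2) powr p \<le> \<bar>T k x\<bar> powr p" using kh p by (intro powr_mono2) auto
    qed simp
    then show ?thesis using cpos unfolding m_def J_def by (simp add: field_simps)
  qed
  define Cs where "Cs = 2 powr p * C3 + 1"
  have "\<exists>K0\<ge>1. m K0 = 0"
  proof (rule stampacchia[where \<phi>=m and C=Cs and \<beta>=\<beta> and p=p])
    show "\<And>k. 1 \<le> k \<Longrightarrow> 0 \<le> m k" unfolding m_def by simp
    show "\<And>k h. 1 \<le> k \<Longrightarrow> k \<le> h \<Longrightarrow> m h \<le> m k"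
    proof -
      fix k h :: real assume "1 \<le> k" "k \<le> h"
      then have sub: "A h \<subseteq> A k" unfolding A_def by auto
      have "A k \<in> fmeasurable M" using Afin[of k] Asets[of k] \<open>1 \<le> k\<close> by (auto simp: fmeasurable_def)
      then show "m h \<le> m k" unfolding m_def by (rule measure_mono_fmeasurable[OF sub Asets])
    qed
    show "0 < Cs" unfolding Cs_def using C3 by (simp add: add_nonneg_pos)
    show "1 < \<beta>" by (rule \<beta>1)
    show "0 < p" using p by simp
    show "\<And>k h. 1 \<le> k \<Longrightarrow> k < h \<Longrightarrow> m h \<le> Cs * m k powr \<beta> / (h - k) powr p"
    proof -
      fix k h :: real assume k1: "1 \<le> k" and kh: "k < h"
      have k: "k > 0" using k1 by simp
      have hk: "(h - k) powr p > 0" using kh by simp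
      have eq2: "((h - k) / 2) powr p = (h - k) powr p / 2 powr p" using kh by (simp add: powr_divide)
      have "(h - k) powr p / 2 powr p * m h \<le> C3 * m k powr \<beta>"
        using cheb[OF k kh] Jm[OF k] unfolding eq2 by simp
      then have "m h \<le> 2 powr p * C3 * m k powr \<beta> / (h - k) powr p"
        using hk by (simp add: field_simps)
      also have "\<dots> \<le> Cs * m k powr \<beta> / (h - k) powr p"
        unfolding Cs_def using hk by (intro divide_right_mono mult_right_mono) auto
      finally show "m h \<le> Cs * m k powr \<beta> / (h - k) powr p" .
    qed
  qed
  then obtain K0 where K0: "K0 \<ge> 1" "m K0 = 0" by blast
  have "emeasure M (A K0) = 0"
    using K0 Afin[of K0] unfolding m_def by (simp add: emeasure_eq_ennreal_measure)
  then have "AE x in M. \<bar>u x\<bar> \<le> K0"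
    by (intro AE_I'[of "A K0"]) (auto simp: A_def Asets[unfolded A_def])
  then show ?thesis unfolding memLinf_def using um by blast
qed

end
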